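(* Let $(X,\|\cdot\|)$ be a normed linear space over $\mathbb{R}$ or $\mathbb{C}$, and let $a,x_1,\dots,x_n\in X\setminus\{0\}$ satisfy $\|a\|\ge\|x_j-a\|$ for each $j\in\{1,\dots,n\}$. Then for any $p_1,\dots,p_n\ge0$ with $\sum_{j=1}^n p_j=1$, $$\frac{\big\|\sum_{j=1}^n p_jx_j\big\|}{\sum_{j=1}^n p_j\|x_j\|}\ \ge\ \min_{1\le j\le n}\left\{\frac{\|a\|-\|x_j-a\|}{\|x_j\|}\right\}\ (\ge0).$$ The inequality is sharp: equality holds when $x_1=\dots=x_n=\varepsilon a$ for some $\varepsilon\in(0,1)$. *)

theory Defs
  imports Main "HOL.Real_Vector_Spaces"
begin

end

theory Submission
  imports Defs
begin

theorem theorem2p3: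
  fixes a :: "'v :: real_normed_vector"
    and x :: "nat \<Rightarrow> 'v"
    and p :: "nat \<Rightarrow> real"
    and n :: nat
  assumes a_nz: "a \<noteq> 0"
    and x_nz: "\<forall>j\<in>{1..n}. x j \<noteq> 0"
    and dist: "\<forall>j\<in>{1..n}. norm a \<ge> norm (x j - a)"
    and p_nonneg: "\<forall>j\<in>{1..n}. p j \<ge> 0"
    and p_sum: "(\<Sum>j=1..n. p j) = 1"
  shows "norm (\<Sum>j=1..n. p j *\<^sub>R x j) / (\<Sum>j=1..n. p j * norm (x j))
           \<ge> Min ((\<lambda>j. (norm a - norm (x j - a)) / norm (x j)) ` {1..n})
       \<and> Min ((\<lambda>j. (norm a - norm (x j - a)) / norm (x j)) ` {1..n}) \<ge> 0
       \<and> (\<forall>\<epsilon>::real. 0 < \<epsilon> \<and> \<epsilon> < 1 \<and> (\<forall>j\<in>{1..n}. x j = \<epsilon> *\<^sub>R a) \<longrightarrow>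
            norm (\<Sum>j=1..n. p j *\<^sub>R x j) / (\<Sum>j=1..n. p j * norm (x j))
            = Min ((\<lambda>j. (norm a - norm (x j - a)) / norm (x j)) ` {1..n}))"
proof -
  define S where "S = {1..n}"
  define f where "f = (\<lambda>j. (norm a - norm (x j - a)) / norm (x j))"
  define m where "m = Min (f ` S)"
  define D where "D = (\<Sum>j\<in>S. p j * norm (x j))"
  have fin: "finite S" by (simp add: S_def)
  have ne: "S \<noteq> {}" using p_sum by (cases "n = 0") (auto simp: S_def)
  have fge: "\<forall>j\<in>S. f j \<ge> 0" using dist x_nz by (auto simp: f_def S_def)
  have m0: "m \<ge> 0" unfolding m_def using fin ne fge by (simp add: Min_ge_iff)
  have mx: "m * norm (x j) \<le> norm a - norm (x j - a)" if "j \<in> S" for j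
  proof -
    have "m \<le> f j" unfolding m_def using fin that by simp
    moreover have "norm (x j) > 0" using x_nz that by (auto simp: S_def)
    ultimately show ?thesis by (simp add: f_def pos_le_divide_eq mult.commute)
  qed
  have Dpos: "D > 0"
  proof -
    obtain k where k: "k \<in> S" "p k > 0"
    proof (rule ccontr)
      assume "\<not> thesis"
      then have "\<forall>j\<in>S. p j = 0" using p_nonneg that by (force simp: S_def)
      then show False using p_sum by (simp add: S_def)
    qed
    have "p k * norm (x k) > 0" using k x_nz by (auto simp: S_def)
    moreover have "p k * norm (x k) \<le> D" unfolding D_def
      by (rule member_le_sum) (use k p_nonneg in \<open>auto simp: S_def\<close>)
    ultimately show ?thesis by simp
  qed
  have psum: "(\<Sum>j\<in>S. p j) = 1" using p_sum by (simp add: S_def)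
  have eq: "(\<Sum>j\<in>S. p j *\<^sub>R x j) = a - (\<Sum>j\<in>S. p j *\<^sub>R (a - x j))"
  proof -
    have "(\<Sum>j\<in>S. p j *\<^sub>R (a - x j)) = (\<Sum>j\<in>S. p j *\<^sub>R a) - (\<Sum>j\<in>S. p j *\<^sub>R x j)"
      by (simp add: scaleR_diff_right sum_subtractf)
    also have "(\<Sum>j\<in>S. p j *\<^sub>R a) = a" using psum by (simp add: scaleR_sum_left[symmetric])
    finally show ?thesis by simp
  qed
  have n1: "norm (\<Sum>j\<in>S. p j *\<^sub>R (a - x j)) \<le> (\<Sum>j\<in>S. p j * norm (x j - a))"
  proof -
    have "norm (\<Sum>j\<in>S. p j *\<^sub>R (a - x j)) \<le> (\<Sum>j\<in>S. norm (p j *\<^sub>R (a - x j)))"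
      by (rule norm_sum)
    also have "\<dots> = (\<Sum>j\<in>S. p j * norm (x j - a))"
      using p_nonneg by (intro sum.cong) (auto simp: S_def norm_minus_commute)
    finally show ?thesis .
  qed
  have "m * D = (\<Sum>j\<in>S. p j * (m * norm (x j)))" unfolding D_def
    by (simp add: sum_distrib_left algebra_simps)
  also have "\<dots> \<le> (\<Sum>j\<in>S. p j * (norm a - norm (x j - a)))"
    using mx p_nonneg by (intro sum_mono mult_left_mono) (auto simp: S_def)
  also have "\<dots> = norm a - (\<Sum>j\<in>S. p j * norm (x j - a))"
    using psum by (simp add: right_diff_distrib sum_subtractf sum_distrib_right[symmetric])
  also have "\<dots> \<le> norm a - norm (\<Sum>j\<in>S. p j *\<^sub>R (a - x j))" using n1 by simp
  also have "\<dots> \<le> norm (\<Sum>j\<in>S. p j *\<^sub>R x j)" unfolding eq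
    by (metis norm_triangle_ineq2 norm_minus_commute)
  finally have main: "m * D \<le> norm (\<Sum>j\<in>S. p j *\<^sub>R x j)" .
  have A: "m \<le> norm (\<Sum>j\<in>S. p j *\<^sub>R x j) / D" using main Dpos by (simp add: pos_le_divide_eq)
  have C: "norm (\<Sum>j\<in>S. p j *\<^sub>R x j) / D = m"
    if e: "0 < \<epsilon>" "\<epsilon> < 1" "\<forall>j\<in>S. x j = \<epsilon> *\<^sub>R a" for \<epsilon> :: real
  proof -
    have na: "norm a > 0" using a_nz by simp
    have "(\<Sum>j\<in>S. p j *\<^sub>R x j) = (\<Sum>j\<in>S. p j *\<^sub>R (\<epsilon> *\<^sub>R a))" using e(3) by simp
    also have "\<dots> = \<epsilon> *\<^sub>R a" using psum by (simp add: scaleR_sum_left[symmetric] sum_distrib_right[symmetric])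
    finally have s: "norm (\<Sum>j\<in>S. p j *\<^sub>R x j) = \<epsilon> * norm a" using e by simp
    have "D = (\<Sum>j\<in>S. p j * (\<epsilon> * norm a))" unfolding D_def using e(3) e(1) by (intro sum.cong) auto
    also have "\<dots> = \<epsilon> * norm a" using psum by (simp add: sum_distrib_right[symmetric])
    finally have d: "D = \<epsilon> * norm a" .
    have fj: "f j = 1" if "j \<in> S" for j
    proof -
      have "x j - a = (\<epsilon> - 1) *\<^sub>R a" using e(3) that by (simp add: algebra_simps)
      then have "norm (x j - a) = (1 - \<epsilon>) * norm a" using e by simp
      moreover have "norm (x j) = \<epsilon> * norm a" using e that by simp
      ultimately show ?thesis using e na by (simp add: f_def field_simps)
    qed
    have "f ` S = {1}" using fj ne by auto
    then have "m = 1" by (simp add: m_def)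
    then show ?thesis using s d e na by simp
  qed
  show ?thesis using A m0 C unfolding m_def f_def D_def S_def by blast
qed

end
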